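(* Let $p\in(0,1)$ be fixed and let $c>0$, $\varepsilon>0$. There is a constant $K>0$ such that with high probability the following holds for every induced subgraph $H$ of $G(n,p)$ on at least $\varepsilon n$ vertices and every spanning subgraph $F\subseteq H$ for which there is a spanning subgraph $\tilde H$ of $H$, obtained from $H$ by removing at most $cn$ edges, such that $F$ is $C_4$-saturated in $\tilde H$: (1) $F$ has at most $\lfloor\frac{3}{p}\ln n\rfloor$ isolated vertices; (2) the number of vertices of degree $1$ in $F$ is at most $K\left(\sqrt{|E(F)|}\ln n+\frac{n}{\ln n}\right)$.
   Context: $G(n,p)$ is the binomial random graph on $[n]$ with edge probability $p$; with high probability means with probability tending to $1$ as $n\to\infty$. A spanning subgraph $F$ of a graph $G$ is $C_4$-saturated in $G$ if $F$ contains no $4$-cycle $C_4$ but adding to $F$ any edge of $G$ not in $F$ creates a copy of $C_4$. *)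

theory Defs
  imports "HOL-Probability.Probability"
begin

definition all_edges :: "nat \<Rightarrow> nat set set" where
  "all_edges n = {e. \<exists>i j. i < j \<and> j < n \<and> e = {i, j}}"

text \<open>Binomial random graph G(n,p) on vertex set {0..<n}, as a distribution on edge sets:
  every potential edge is present independently with probability p.\<close>
definition Gnp :: "nat \<Rightarrow> real \<Rightarrow> nat set set pmf" where
  "Gnp n p = map_pmf (\<lambda>f. {e \<in> all_edges n. f e})
                (Pi_pmf (all_edges n) False (\<lambda>_. bernoulli_pmf p))"

definition whp :: "real \<Rightarrow> (nat \<Rightarrow> nat set set \<Rightarrow> bool) \<Rightarrow> bool" where
  "whp p P \<longleftrightarrow> ((\<lambda>n. measure_pmf.prob (Gnp n p) {E. P n E}) \<longlonglongrightarrow> 1)"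

definition induced_edges :: "nat set set \<Rightarrow> nat set \<Rightarrow> nat set set" where
  "induced_edges E S = {e \<in> E. e \<subseteq> S}"

definition has_C4 :: "nat set set \<Rightarrow> bool" where
  "has_C4 F \<longleftrightarrow> (\<exists>a b c d. distinct [a, b, c, d] \<and>
      {a, b} \<in> F \<and> {b, c} \<in> F \<and> {c, d} \<in> F \<and> {d, a} \<in> F)"

definition C4_saturated_in :: "nat set set \<Rightarrow> nat set set \<Rightarrow> bool" where
  "C4_saturated_in F G \<longleftrightarrow> F \<subseteq> G \<and> \<not> has_C4 F \<and> (\<forall>e \<in> G - F. has_C4 (insert e F))"

definition degree :: "nat set set \<Rightarrow> nat \<Rightarrow> nat" where
  "degree F v = card {u. {v, u} \<in> F}"

end

theory Submission
  imports Defs "HOL-Real_Asymp.Real_Asymp"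
begin

lemma finite_all_edges: "finite (all_edges n)"
proof -
  have "all_edges n \<subseteq> Pow {0..<n}" unfolding all_edges_def by auto
  then show ?thesis by (rule finite_subset) auto
qed

lemma set_pmf_Gnp: "set_pmf (Gnp n p) \<subseteq> Pow (all_edges n)"
  unfolding Gnp_def by auto

lemma finite_set_pmf_Gnp: "finite (set_pmf (Gnp n p))"
  using set_pmf_Gnp finite_all_edges by (meson finite_Pow_iff finite_subset)

lemma expect_half:
  assumes M: "M \<subseteq> all_edges n" and p: "0 \<le> p" "p \<le> 1"
  shows "measure_pmf.expectation (Gnp n p) (\<lambda>E. (1/2::real) ^ card (M \<inter> E)) = (1 - p/2) ^ card M"
proof -
  let ?A = "all_edges n"
  define h where "h = (\<lambda>e (b::bool). if e \<in> M \<and> b then 1/2 else (1::real))"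
  have eq: "(1/2::real) ^ card (M \<inter> {e \<in> ?A. f e}) = (\<Prod>e\<in>?A. h e (f e))" for f
  proof -
    have "(\<Prod>e\<in>?A. h e (f e)) = (\<Prod>e\<in>?A \<inter> {e. e \<in> M \<and> f e}. 1/2) * (\<Prod>e\<in>?A \<inter> - {e. e \<in> M \<and> f e}. 1)"
      unfolding h_def by (rule prod.If_cases) (rule finite_all_edges)
    also have "?A \<inter> {e. e \<in> M \<and> f e} = M \<inter> {e \<in> ?A. f e}" using M by auto
    finally show ?thesis by simp
  qed
  have "measure_pmf.expectation (Gnp n p) (\<lambda>E. (1/2::real) ^ card (M \<inter> E))
     = measure_pmf.expectation (Pi_pmf ?A False (\<lambda>_. bernoulli_pmf p)) (\<lambda>f. \<Prod>e\<in>?A. h e (f e))"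
    unfolding Gnp_def by (simp add: eq)
  also have "\<dots> = (\<Prod>e\<in>?A. measure_pmf.expectation (bernoulli_pmf p) (h e))"
    by (rule expectation_prod_Pi_pmf) (auto simp: finite_all_edges h_def integrable_measure_pmf_finite)
  also have "\<dots> = (\<Prod>e\<in>?A. if e \<in> M then 1 - p/2 else 1)"
    using p by (intro prod.cong) (auto simp: h_def algebra_simps)
  also have "\<dots> = (1 - p/2) ^ card M"
    using M finite_all_edges by (simp add: prod.If_cases Int_absorb1 Int_absorb2)
  finally show ?thesis .
qed

lemma core:
  assumes M: "M \<subseteq> all_edges n" and p: "0 \<le> p" "p \<le> 1"
  shows "measure_pmf.prob (Gnp n p) {E. real (card (M \<inter> E)) \<le> j} \<le> 2 powr j * (1 - p/2) ^ card M"
proof -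
  have int: "integrable (measure_pmf (Gnp n p)) f" for f :: "_ \<Rightarrow> real"
    by (rule integrable_measure_pmf_finite[OF finite_set_pmf_Gnp])
  have "measure_pmf.prob (Gnp n p) {E. real (card (M \<inter> E)) \<le> j}
      = measure_pmf.expectation (Gnp n p) (indicator {E. real (card (M \<inter> E)) \<le> j})"
    by simp
  also have "\<dots> \<le> measure_pmf.expectation (Gnp n p) (\<lambda>E. 2 powr j * (1/2::real) ^ card (M \<inter> E))"
  proof (rule integral_mono[OF int int])
    fix E
    show "indicator {E. real (card (M \<inter> E)) \<le> j} E \<le> 2 powr j * (1/2::real) ^ card (M \<inter> E)"
    proof (cases "real (card (M \<inter> E)) \<le> j")
      case True
      have "(2::real) ^ card (M \<inter> E) = 2 powr real (card (M \<inter> E))" by (simp add: powr_realpow)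
      also have "\<dots> \<le> 2 powr j" using True by simp
      finally have "1 \<le> 2 powr j * (1/2::real) ^ card (M \<inter> E)"
        by (simp add: power_one_over field_simps)
      then show ?thesis using True by simp
    qed simp
  qed
  also have "\<dots> = 2 powr j * (1 - p/2) ^ card M"
    using expect_half[OF M p] by simp
  finally show ?thesis .
qed

lemma C4_helper:
  assumes "distinct [v,u,c,d]" "{u,c} \<in> insert {v,u} F" "{c,d} \<in> insert {v,u} F" "{d,v} \<in> insert {v,u} F"
  shows "\<exists>y x. {v,y} \<in> F \<and> {y,x} \<in> F \<and> {x,u} \<in> F \<and> distinct [v,u,x,y]"
proof -
  have 1: "{u,c} \<noteq> {v,u}" using assms(1) by (auto simp: doubleton_eq_iff)
  have 2: "{c,d} \<noteq> {v,u}" using assms(1) by (auto simp: doubleton_eq_iff)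
  have 3: "{d,v} \<noteq> {v,u}" using assms(1) by (auto simp: doubleton_eq_iff)
  have "{d,v} \<in> F" using assms(4) 3 by simp
  then have a: "{v,d} \<in> F" by (simp add: insert_commute)
  have "{c,d} \<in> F" using assms(3) 2 by simp
  then have b: "{d,c} \<in> F" by (simp add: insert_commute)
  have "{u,c} \<in> F" using assms(2) 1 by simp
  then have c: "{c,u} \<in> F" by (simp add: insert_commute)
  show ?thesis using assms(1) a b c by (intro exI[of _ d] exI[of _ c]) auto
qed

lemma C4_insert:
  assumes "\<not> has_C4 F" "has_C4 (insert {v,u} F)"
  shows "\<exists>y x. {v,y} \<in> F \<and> {y,x} \<in> F \<and> {x,u} \<in> F \<and> distinct [v,u,x,y]"
proof -
  obtain a b c d where d: "distinct [a,b,c,d]" and e: "{a, b} \<in> insert {v,u} F" "{b, c} \<in> insert {v,u} F"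
    "{c, d} \<in> insert {v,u} F" "{d, a} \<in> insert {v,u} F"
    using assms(2) unfolding has_C4_def by (elim exE conjE) (rule that; assumption)
  have nf: "\<not> ({a,b} \<in> F \<and> {b,c} \<in> F \<and> {c,d} \<in> F \<and> {d,a} \<in> F)"
  proof
    assume h: "{a,b} \<in> F \<and> {b,c} \<in> F \<and> {c,d} \<in> F \<and> {d,a} \<in> F"
    show False using assms(1) unfolding has_C4_def
      apply (rule notE)
      apply (rule exI[of _ a])
      apply (rule exI[of _ b])
      apply (rule exI[of _ c])
      apply (rule exI[of _ d])
      using d h by simp
  qed
  have "{a,b} = {v,u} \<or> {b,c} = {v,u} \<or> {c,d} = {v,u} \<or> {d,a} = {v,u}"
  proof (rule ccontr)
    assume "\<not> ?thesis"
    then have "{a,b} \<in> F" "{b,c} \<in> F" "{c,d} \<in> F" "{d,a} \<in> F" using e by simp_all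
    then show False using nf by simp
  qed
  then consider "a = v \<and> b = u" | "a = u \<and> b = v" | "b = v \<and> c = u" | "b = u \<and> c = v"
    | "c = v \<and> d = u" | "c = u \<and> d = v" | "d = v \<and> a = u" | "d = u \<and> a = v"
    unfolding doubleton_eq_iff by argo
  then show ?thesis
  proof cases
    case 1 then show ?thesis using C4_helper[of v u c d F] d e by simp
  next
    case 2 then show ?thesis using C4_helper[of v u d c F] d e by (simp add: insert_commute)
  next
    case 3 then show ?thesis using C4_helper[of v u d a F] d e by (simp add: insert_commute)
  next
    case 4 then show ?thesis using C4_helper[of v u a d F] d e by (simp add: insert_commute)
  next
    case 5 then show ?thesis using C4_helper[of v u a b F] d e by (simp add: insert_commute)
  next
    case 6 then show ?thesis using C4_helper[of v u b a F] d e by (simp add: insert_commute)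
  next
    case 7 then show ?thesis using C4_helper[of v u b c F] d e by (simp add: insert_commute)
  next
    case 8 then show ?thesis using C4_helper[of v u c b F] d e by (simp add: insert_commute)
  qed
qed

lemma finite_nbrs: "finite F \<Longrightarrow> finite {u. {v,u} \<in> F}"
proof -
  assume fin: "finite F"
  have "inj_on (\<lambda>u. {v,u}) {u. {v,u} \<in> F}" by (auto simp: inj_on_def doubleton_eq_iff)
  moreover have "(\<lambda>u. {v,u}) ` {u. {v,u} \<in> F} \<subseteq> F" by auto
  ultimately show ?thesis using fin by (meson finite_imageD finite_subset)
qed

lemma handshake:
  fixes F :: "nat set set"
  assumes "finite F" "finite V"
  shows "(\<Sum>v\<in>V. card {u. {v,u} \<in> F}) \<le> 2 * card F"
proof -
  have "(\<Sum>v\<in>V. card {u. {v,u} \<in> F}) = card (SIGMA v:V. {u. {v,u} \<in> F})"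
    using assms by (simp add: card_SigmaI finite_nbrs)
  also have "\<dots> \<le> card (F \<times> (UNIV :: bool set))"
  proof (rule card_inj_on_le)
    show "inj_on (\<lambda>(v,u). ({v,u}, v < u)) (SIGMA v:V. {u. {v,u} \<in> F})"
      by (auto simp: inj_on_def doubleton_eq_iff)
    show "(\<lambda>(v,u). ({v,u}, v < u)) ` (SIGMA v:V. {u. {v,u} \<in> F}) \<subseteq> F \<times> UNIV" by auto
    show "finite (F \<times> (UNIV :: bool set))" using assms by simp
  qed
  also have "\<dots> = 2 * card F" by (simp add: card_cartesian_product)
  finally show ?thesis .
qed

definition pairs :: "nat set \<Rightarrow> nat set set" where
  "pairs T = {e. e \<subseteq> T \<and> card e = 2}"

definition Rdense :: "real \<Rightarrow> nat \<Rightarrow> nat set set \<Rightarrow> bool" where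
  "Rdense p n E \<longleftrightarrow> (\<forall>T \<subseteq> {0..<n}. real (card T) \<ge> 16/p * ln (real n) + 1 \<longrightarrow>
      real (card (pairs T \<inter> E)) > p/4 * real (card (pairs T)))"

lemma card_pairs: "finite T \<Longrightarrow> 2 * real (card (pairs T)) = real (card T) * (real (card T) - 1)"
proof -
  assume "finite T"
  then have "card (pairs T) = card T choose 2" unfolding pairs_def by (rule n_subsets)
  also have "\<dots> = card T * (card T - 1) div 2" by (rule choose_two)
  moreover have "even (card T * (card T - 1))" by (cases "even (card T)") auto
  ultimately have h: "2 * card (pairs T) = card T * (card T - 1)" by simp
  have "2 * real (card (pairs T)) = real (card T) * real (card T - 1)"
    using arg_cong[OF h, of real] by simp
  then show ?thesis by (cases "card T = 0") (simp_all add: of_nat_diff)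
qed

lemma dense_conseq:
  assumes D: "Rdense p n E" and p: "0 < p" and T: "T \<subseteq> {0..<n}" and Dl: "0 \<le> \<Delta>"
    and deg: "\<And>v. v \<in> T \<Longrightarrow> real (card {u \<in> T. {v,u} \<in> E}) \<le> \<Delta>"
  shows "real (card T) \<le> 16/p * ln (real n) + 2 + 8 * \<Delta> / p"
proof (cases "real (card T) \<ge> 16/p * ln (real n) + 1")
  case False
  have "ln (real n) \<ge> 0" by (cases n) auto
  then have "0 \<le> 8 * \<Delta> / p" "0 \<le> 16/p * ln (real n)" using Dl p by auto
  then show ?thesis using False by linarith
next
  case True
  have finT: "finite T" using T finite_subset by blast
  let ?t = "real (card T)"
  have gt: "real (card (pairs T \<inter> E)) > p/4 * real (card (pairs T))"
    using D True T unfolding Rdense_def by blast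
  have "card (pairs T \<inter> E) \<le> card ((\<lambda>(v,u). {v,u}) ` (SIGMA v:T. {u \<in> T. {v,u} \<in> E}))"
  proof (rule card_mono)
    show "finite ((\<lambda>(v,u). {v,u}) ` (SIGMA v:T. {u \<in> T. {v,u} \<in> E}))" using finT by auto
    show "pairs T \<inter> E \<subseteq> (\<lambda>(v,u). {v,u}) ` (SIGMA v:T. {u \<in> T. {v,u} \<in> E})"
    proof
      fix e assume "e \<in> pairs T \<inter> E"
      then obtain x y where "e = {x,y}" "x \<noteq> y" "e \<subseteq> T" "e \<in> E" unfolding pairs_def card_2_iff by blast
      then show "e \<in> (\<lambda>(v,u). {v,u}) ` (SIGMA v:T. {u \<in> T. {v,u} \<in> E})"
        by (intro image_eqI[of _ _ "(x,y)"]) auto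
    qed
  qed
  also have "\<dots> \<le> card (SIGMA v:T. {u \<in> T. {v,u} \<in> E})" by (rule card_image_le) (use finT in auto)
  also have "\<dots> = (\<Sum>v\<in>T. card {u \<in> T. {v,u} \<in> E})" using finT by (simp add: card_SigmaI)
  finally have "real (card (pairs T \<inter> E)) \<le> real (\<Sum>v\<in>T. card {u \<in> T. {v,u} \<in> E})"
    by (simp only: of_nat_le_iff)
  also have "\<dots> = (\<Sum>v\<in>T. real (card {u \<in> T. {v,u} \<in> E}))" by (rule of_nat_sum)
  also have "\<dots> \<le> (\<Sum>v\<in>T. \<Delta>)" by (rule sum_mono) (rule deg)
  also have "\<dots> = ?t * \<Delta>" by simp
  finally have le: "real (card (pairs T \<inter> E)) \<le> ?t * \<Delta>" .
  have cp: "2 * real (card (pairs T)) = ?t * (?t - 1)" using card_pairs[OF finT] .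
  have a: "p * real (card (pairs T)) < 4 * real (card (pairs T \<inter> E))" using gt by simp
  have tpos: "?t > 0"
  proof -
    have "ln (real n) \<ge> 0" by (cases n) auto
    then have "16/p * ln (real n) \<ge> 0" using p by simp
    then show ?thesis using True by linarith
  qed
  have "p * (?t * (?t - 1)) = 2 * (p * real (card (pairs T)))" using cp by simp
  also have "\<dots> < 8 * real (card (pairs T \<inter> E))" using a by simp
  also have "\<dots> \<le> 8 * (?t * \<Delta>)" using le by simp
  finally have "p * (?t * (?t - 1)) < 8 * (?t * \<Delta>)" .
  then have "?t * (p * (?t - 1)) < ?t * (8 * \<Delta>)" by (metis mult.left_commute)
  then have "p * (?t - 1) < 8 * \<Delta>" using tpos by (simp add: mult_less_cancel_left_pos)
  then have "?t - 1 < 8 * \<Delta> / p" using p by (simp add: field_simps)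
  moreover have "ln (real n) \<ge> 0" by (cases n) auto
  then have "16/p * ln (real n) \<ge> 0" using p by simp
  ultimately show ?thesis by linarith
qed

lemma all_edges_noloop: "{x} \<notin> all_edges n"
  unfolding all_edges_def by (auto simp: doubleton_eq_iff)

lemma all_edges_sub: "e \<in> all_edges n \<Longrightarrow> e \<subseteq> {0..<n}"
  unfolding all_edges_def by auto

lemma deg1_nbrs:
  assumes "degree F v = 1"
  shows "{u. {v,u} \<in> F} = {(SOME w. {v,w} \<in> F)}"
proof -
  obtain w where w: "{u. {v,u} \<in> F} = {w}" using assms unfolding degree_def by (rule card_1_singletonE)
  then have "{v,w} \<in> F" by auto
  then have "{v, SOME w. {v,w} \<in> F} \<in> F" by (rule someI)
  then show ?thesis using w by auto
qed

lemma key_step: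
  assumes Esub: "E \<subseteq> all_edges n" and FH: "F \<subseteq> Ht" and HI: "Ht \<subseteq> induced_edges E S"
    and sat: "C4_saturated_in F Ht"
    and v: "v \<in> S" and u: "u \<in> S" and e: "{v,u} \<in> E" and nb: "{y. {v,y} \<in> F} = {w}"
  shows "{v,u} \<in> induced_edges E S - Ht \<or> u = w \<or> (\<exists>x. {u,x} \<in> F \<and> {x,w} \<in> F)"
proof -
  have ind: "{v,u} \<in> induced_edges E S" using v u e unfolding induced_edges_def by auto
  show ?thesis
  proof (cases "{v,u} \<in> Ht")
    case False then show ?thesis using ind by blast
  next
    case True
    show ?thesis
    proof (cases "{v,u} \<in> F")
      case True then have "u \<in> {y. {v,y} \<in> F}" by simp
      then show ?thesis using nb by blast
    next
      case False
      then have "has_C4 (insert {v,u} F)" using sat \<open>{v,u} \<in> Ht\<close> unfolding C4_saturated_in_def by blast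
      moreover have "\<not> has_C4 F" using sat unfolding C4_saturated_in_def by blast
      ultimately obtain y x where yx: "{v,y} \<in> F" "{y,x} \<in> F" "{x,u} \<in> F"
        using C4_insert by blast
      have "y = w" using yx(1) nb by blast
      then have "{u,x} \<in> F \<and> {x,w} \<in> F" using yx by (simp add: insert_commute)
      then show ?thesis by blast
    qed
  qed
qed

lemma deg1_bound:
  fixes n :: nat and E F Ht :: "nat set set" and S :: "nat set" and c p :: real
  assumes Esub: "E \<subseteq> all_edges n" and dense: "Rdense p n E" and p: "0 < p" "p < 1"
    and S: "S \<subseteq> {0..<n}" and FH: "F \<subseteq> Ht" and HI: "Ht \<subseteq> induced_edges E S"
    and Rc: "real (card (induced_edges E S - Ht)) \<le> c * real n"
    and sat: "C4_saturated_in F Ht" and ln1: "ln (real n) \<ge> 1"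
  shows "real (card {v \<in> S. degree F v = 1}) \<le> 2 * c * real n / ln (real n)
     + 2 * sqrt (real (card F)) * (16/p * ln (real n) + 2 + 8 * ln (real n) / p)
     + (16/p * ln (real n) + 2 + 8 * (ln (real n) + 1 + sqrt (real (card F)) * (16/p * ln (real n) + 2 + 8 * ln (real n) / p)) / p)"
proof -
  define L where "L = ln (real n)"
  define s0 where "s0 = 16/p * L + 2 + 8 * L / p"
  define R where "R = induced_edges E S - Ht"
  define f where "f = (\<lambda>v. SOME w. {v,w} \<in> F)"
  define D where "D = {v \<in> S. degree F v = 1}"
  define sF where "sF = sqrt (real (card F))"
  have finA: "finite (all_edges n)" by (rule finite_all_edges)
  have RA: "R \<subseteq> all_edges n" using Esub unfolding R_def induced_edges_def by auto
  have FA: "F \<subseteq> all_edges n" using FH HI Esub unfolding induced_edges_def by auto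
  have finR: "finite R" using RA finA finite_subset by blast
  have finF: "finite F" using FA finA finite_subset by blast
  have FS: "e \<in> F \<Longrightarrow> e \<subseteq> S" for e using FH HI unfolding induced_edges_def by auto
  have noloop: "{x,x} \<notin> F" for x using FA all_edges_noloop by auto
  have Dn: "v \<in> D \<Longrightarrow> {u. {v,u} \<in> F} = {f v}" for v unfolding D_def f_def using deg1_nbrs by blast
  have key: "v \<in> D \<Longrightarrow> u \<in> S \<Longrightarrow> {v,u} \<in> E \<Longrightarrow> {v,u} \<in> R \<or> u = f v \<or> (\<exists>x. {u,x} \<in> F \<and> {x,f v} \<in> F)" for u v
    unfolding R_def using key_step[OF Esub FH HI sat, of v u "f v"] Dn D_def by blast
  have DS: "D \<subseteq> S" unfolding D_def by auto
  have L0: "L \<ge> 1" using ln1 L_def by simp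
  have s0pos: "s0 \<ge> 0" unfolding s0_def using L0 p by simp
  define Bad where "Bad = {v \<in> D. real (card {u. {v,u} \<in> R}) > L}"
  define D' where "D' = D - Bad"
  define C where "C = (\<lambda>w. {v \<in> D'. f v = w})"
  have finS: "finite S" using S finite_subset by blast
  have "real (card Bad) * L \<le> (\<Sum>v\<in>Bad. real (card {u. {v,u} \<in> R}))"
  proof -
    have "(\<Sum>v\<in>Bad. L) \<le> (\<Sum>v\<in>Bad. real (card {u. {v,u} \<in> R}))"
      by (rule sum_mono) (auto simp: Bad_def)
    then show ?thesis by simp
  qed
  also have "\<dots> \<le> (\<Sum>v\<in>{0..<n}. real (card {u. {v,u} \<in> R}))"
    by (rule sum_mono2) (use S DS in \<open>auto simp: Bad_def\<close>)
  also have "\<dots> = real (\<Sum>v\<in>{0..<n}. card {u. {v,u} \<in> R})" by simp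
  also have "\<dots> \<le> real (2 * card R)" using handshake[OF finR, of "{0..<n}"] by (simp only: of_nat_le_iff) simp
  also have "\<dots> \<le> 2 * c * real n" using Rc unfolding R_def by simp
  finally have Badb: "real (card Bad) \<le> 2 * c * real n / L" using L0 by (simp add: field_simps)
  have Cb: "real (card (C w)) \<le> s0" for w
  proof -
    have "real (card (C w)) \<le> 16/p * ln (real n) + 2 + 8 * L / p"
    proof (rule dense_conseq[OF dense p(1)])
      show "C w \<subseteq> {0..<n}" using S DS unfolding C_def D'_def by auto
      show "0 \<le> L" using L0 by simp
      fix v assume v: "v \<in> C w"
      have sub: "{u \<in> C w. {v,u} \<in> E} \<subseteq> {u. {v,u} \<in> R}"
      proof
        fix u assume "u \<in> {u \<in> C w. {v,u} \<in> E}"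
        then have uC: "u \<in> C w" and e: "{v,u} \<in> E" by auto
        have vD: "v \<in> D" and fv: "f v = w" using v unfolding C_def D'_def by auto
        have uD: "u \<in> D" and fu: "f u = w" using uC unfolding C_def D'_def by auto
        have "u \<in> S" using uD DS by auto
        from key[OF vD this e] show "u \<in> {u. {v,u} \<in> R}"
        proof (elim disjE)
          assume "u = f v"
          then have "{u, f u} \<in> F" using Dn[OF uD] fu fv by (metis mem_Collect_eq singletonI)
          then have "{u,u} \<in> F" using \<open>u = f v\<close> fu fv by simp
          then show ?thesis using noloop by blast
        next
          assume "\<exists>x. {u,x} \<in> F \<and> {x, f v} \<in> F"
          then obtain x where x: "{u,x} \<in> F" "{x, f v} \<in> F" by blast
          have "x = f u" using x(1) Dn[OF uD] by blast
          then have "{w,w} \<in> F" using x(2) fu fv by simp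
          then show ?thesis using noloop by blast
        qed simp
      qed
      have "card {u \<in> C w. {v,u} \<in> E} \<le> card {u. {v,u} \<in> R}"
        by (rule card_mono[OF finite_nbrs[OF finR] sub])
      moreover have "real (card {u. {v,u} \<in> R}) \<le> L"
        using v unfolding C_def D'_def Bad_def by auto
      ultimately show "real (card {u \<in> C w. {v,u} \<in> E}) \<le> L" by linarith
    qed
    then show ?thesis unfolding s0_def L_def by simp
  qed
  define Hi where "Hi = {w \<in> {0..<n}. real (degree F w) > sF}"
  have finHi: "finite Hi" unfolding Hi_def by auto
  have Hib: "real (card Hi) \<le> 2 * sF"
  proof (cases "card F = 0")
    case True
    then have "F = {}" using finF by simp
    then have "Hi = {}" unfolding Hi_def degree_def sF_def by simp
    then show ?thesis unfolding sF_def by simp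
  next
    case False
    then have sFp: "sF > 0" unfolding sF_def by simp
    have "real (card Hi) * sF = (\<Sum>w\<in>Hi. sF)" by simp
    also have "\<dots> \<le> (\<Sum>w\<in>Hi. real (degree F w))" by (rule sum_mono) (auto simp: Hi_def)
    also have "\<dots> \<le> (\<Sum>w\<in>{0..<n}. real (degree F w))" by (rule sum_mono2) (auto simp: Hi_def)
    also have "\<dots> = real (\<Sum>w\<in>{0..<n}. card {u. {w,u} \<in> F})" by (simp add: degree_def)
    also have "\<dots> \<le> real (2 * card F)" using handshake[OF finF, of "{0..<n}"] by (simp only: of_nat_le_iff) simp
    also have "\<dots> = 2 * sF * sF" unfolding sF_def by simp
    finally show ?thesis using sFp by (simp add: mult_le_cancel_right_pos)
  qed
  define Dhi where "Dhi = {v \<in> D'. f v \<in> Hi}"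
  define Dlo where "Dlo = {v \<in> D'. f v \<notin> Hi}"
  have "Dhi \<subseteq> (\<Union>w\<in>Hi. C w)" unfolding Dhi_def C_def by auto
  then have "card Dhi \<le> card (\<Union>w\<in>Hi. C w)"
    by (intro card_mono) (use finHi finS DS in \<open>auto simp: C_def D'_def intro!: finite_subset[OF _ finS]\<close>)
  also have "\<dots> \<le> (\<Sum>w\<in>Hi. card (C w))" by (rule card_UN_le[OF finHi])
  finally have "real (card Dhi) \<le> (\<Sum>w\<in>Hi. real (card (C w)))" by (simp only: of_nat_le_iff of_nat_sum[symmetric])
  also have "\<dots> \<le> (\<Sum>w\<in>Hi. s0)" by (rule sum_mono) (rule Cb)
  also have "\<dots> = real (card Hi) * s0" by simp
  also have "\<dots> \<le> 2 * sF * s0" using Hib s0pos by (simp add: mult_right_mono)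
  finally have Dhib: "real (card Dhi) \<le> 2 * sF * s0" .
  have Dlob: "real (card Dlo) \<le> 16/p * ln (real n) + 2 + 8 * (L + 1 + sF * s0) / p"
  proof (rule dense_conseq[OF dense p(1)])
    show "Dlo \<subseteq> {0..<n}" using S DS unfolding Dlo_def D'_def by auto
    show "0 \<le> L + 1 + sF * s0" using L0 s0pos unfolding sF_def by simp
    fix v assume v: "v \<in> Dlo"
    have vD: "v \<in> D" and fvH: "f v \<notin> Hi" using v unfolding Dlo_def D'_def by auto
    define N where "N = {x. {f v, x} \<in> F}"
    have finN: "finite N" unfolding N_def by (rule finite_nbrs[OF finF])
    have sub: "{u \<in> Dlo. {v,u} \<in> E} \<subseteq> {u. {v,u} \<in> R} \<union> {f v} \<union> (\<Union>x\<in>N. C x)"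
    proof
      fix u assume "u \<in> {u \<in> Dlo. {v,u} \<in> E}"
      then have uL: "u \<in> Dlo" and e: "{v,u} \<in> E" by auto
      have uD: "u \<in> D" and uD': "u \<in> D'" using uL unfolding Dlo_def D'_def by auto
      have "u \<in> S" using uD DS by auto
      from key[OF vD this e] show "u \<in> {u. {v,u} \<in> R} \<union> {f v} \<union> (\<Union>x\<in>N. C x)"
      proof (elim disjE)
        assume "\<exists>x. {u,x} \<in> F \<and> {x, f v} \<in> F"
        then obtain x where x: "{u,x} \<in> F" "{x, f v} \<in> F" by blast
        have "x = f u" using x(1) Dn[OF uD] by blast
        then have "u \<in> C x" using uD' unfolding C_def by simp
        moreover have "x \<in> N" using x(2) unfolding N_def by (simp add: insert_commute)
        ultimately show ?thesis by blast
      qed auto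
    qed
    have "card {u \<in> Dlo. {v,u} \<in> E} \<le> card ({u. {v,u} \<in> R} \<union> {f v} \<union> (\<Union>x\<in>N. C x))"
      by (rule card_mono[OF _ sub]) (use finN finR finite_nbrs finS in \<open>auto simp: C_def D'_def D_def\<close>)
    also have "\<dots> \<le> card ({u. {v,u} \<in> R} \<union> {f v}) + card (\<Union>x\<in>N. C x)" by (rule card_Un_le)
    also have "\<dots> \<le> card {u. {v,u} \<in> R} + card {f v} + card (\<Union>x\<in>N. C x)" using card_Un_le[of "{u. {v,u} \<in> R}" "{f v}"] by linarith
    also have "\<dots> \<le> card {u. {v,u} \<in> R} + 1 + (\<Sum>x\<in>N. card (C x))" using card_UN_le[OF finN, of C] by simp
    finally have "real (card {u \<in> Dlo. {v,u} \<in> E}) \<le> real (card {u. {v,u} \<in> R} + 1 + (\<Sum>x\<in>N. card (C x)))"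
      by (simp only: of_nat_le_iff)
    also have "\<dots> = real (card {u. {v,u} \<in> R}) + 1 + (\<Sum>x\<in>N. real (card (C x)))" by simp
    also have "\<dots> \<le> L + 1 + (\<Sum>x\<in>N. s0)"
    proof -
      have "real (card {u. {v,u} \<in> R}) \<le> L" using v unfolding Dlo_def D'_def Bad_def by auto
      moreover have "(\<Sum>x\<in>N. real (card (C x))) \<le> (\<Sum>x\<in>N. s0)" by (rule sum_mono) (rule Cb)
      ultimately show ?thesis by linarith
    qed
    also have "\<dots> = L + 1 + real (card N) * s0" by simp
    also have "\<dots> \<le> L + 1 + sF * s0"
    proof -
      have "{v, f v} \<in> F" using Dn[OF vD] by blast
      then have "f v \<in> {0..<n}" using FS S by blast
      then have "real (card N) \<le> sF" using fvH unfolding Hi_def N_def degree_def by auto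
      then show ?thesis using s0pos by (simp add: mult_right_mono)
    qed
    finally show "real (card {u \<in> Dlo. {v,u} \<in> E}) \<le> L + 1 + sF * s0" .
  qed
  have "D \<subseteq> Bad \<union> Dhi \<union> Dlo" unfolding D'_def Dhi_def Dlo_def by auto
  then have "card D \<le> card (Bad \<union> Dhi \<union> Dlo)" by (rule card_mono[rotated]) (use finS DS in \<open>auto simp: Bad_def Dhi_def Dlo_def D'_def intro: finite_subset[OF _ finS]\<close>)
  also have "\<dots> \<le> card Bad + card Dhi + card Dlo" by (meson card_Un_le add_le_mono order_trans le_refl)
  finally have "real (card D) \<le> real (card Bad) + real (card Dhi) + real (card Dlo)" by (simp only: of_nat_le_iff of_nat_add[symmetric])
  then show ?thesis using Badb Dhib Dlob unfolding D_def L_def s0_def sF_def by linarith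
qed

definition cross :: "nat set \<Rightarrow> nat set \<Rightarrow> nat set set" where
  "cross I Y = {{i,y} | i y. i \<in> I \<and> y \<in> Y}"

definition kiso :: "real \<Rightarrow> nat \<Rightarrow> nat" where
  "kiso p n = nat \<lfloor>3 / p * ln (real n)\<rfloor> + 1"

definition Rcross :: "real \<Rightarrow> real \<Rightarrow> real \<Rightarrow> nat \<Rightarrow> nat set set \<Rightarrow> bool" where
  "Rcross p c \<epsilon> n E \<longleftrightarrow> (\<forall>I Y. I \<subseteq> {0..<n} \<and> Y \<subseteq> {0..<n} \<and> I \<inter> Y = {} \<and> card I = kiso p n
     \<and> real (card Y) \<ge> \<epsilon> * real n / 2 \<longrightarrow> real (card (cross I Y \<inter> E)) > c * real n)"

lemma iso_bound:
  fixes n :: nat and E F Ht :: "nat set set" and S :: "nat set" and c p :: real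
  assumes Esub: "E \<subseteq> all_edges n" and cr: "Rcross p c \<epsilon> n E" and p: "0 < p"
    and S: "S \<subseteq> {0..<n}" and Sc: "real (card S) \<ge> \<epsilon> * real n"
    and FH: "F \<subseteq> Ht" and HI: "Ht \<subseteq> induced_edges E S"
    and Rc: "real (card (induced_edges E S - Ht)) \<le> c * real n"
    and sat: "C4_saturated_in F Ht" and kb: "real (kiso p n) \<le> \<epsilon> * real n / 2" and n1: "n \<ge> 1"
  shows "real (card {v \<in> S. degree F v = 0}) \<le> of_int \<lfloor>3 / p * ln (real n)\<rfloor>"
proof (rule ccontr)
  assume H: "\<not> ?thesis"
  define R where "R = induced_edges E S - Ht"
  define Iso where "Iso = {v \<in> S. degree F v = 0}"
  have finA: "finite (all_edges n)" by (rule finite_all_edges)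
  have RA: "R \<subseteq> all_edges n" using Esub unfolding R_def induced_edges_def by auto
  have FA: "F \<subseteq> all_edges n" using FH HI Esub unfolding induced_edges_def by auto
  have finR: "finite R" using RA finA finite_subset by blast
  have finF: "finite F" using FA finA finite_subset by blast
  have finS: "finite S" using S finite_subset by blast
  have "ln (real n) \<ge> 0" using n1 by simp
  then have fl0: "\<lfloor>3 / p * ln (real n)\<rfloor> \<ge> 0" using p by simp
  have "real (card Iso) > of_int \<lfloor>3 / p * ln (real n)\<rfloor>" using H unfolding Iso_def by simp
  then have "int (card Iso) > \<lfloor>3 / p * ln (real n)\<rfloor>" by linarith
  then have "card Iso \<ge> kiso p n" unfolding kiso_def using fl0 by linarith
  then obtain I where I: "I \<subseteq> Iso" "card I = kiso p n"
    using obtain_subset_with_card_n by blast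
  have IS: "I \<subseteq> S" using I unfolding Iso_def by auto
  have finI: "finite I" using IS finS finite_subset by blast
  define Y where "Y = S - I"
  have "card Y = card S - card I" unfolding Y_def using IS finI by (simp add: card_Diff_subset)
  moreover have "card I \<le> card S" using IS finS by (simp add: card_mono)
  ultimately have "real (card Y) = real (card S) - real (kiso p n)" using I by simp
  then have Yc: "real (card Y) \<ge> \<epsilon> * real n / 2" using Sc kb by linarith
  have iso: "{u. {i,u} \<in> F} = {}" if "i \<in> I" for i
  proof -
    have "card {u. {i,u} \<in> F} = 0" using that I unfolding Iso_def degree_def by auto
    then show ?thesis using finite_nbrs[OF finF] by simp
  qed
  have sub: "cross I Y \<inter> E \<subseteq> R"
  proof
    fix e assume "e \<in> cross I Y \<inter> E"
    then obtain i y where e: "e = {i,y}" "i \<in> I" "y \<in> Y" "{i,y} \<in> E" unfolding cross_def by blast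
    have ind: "{i,y} \<in> induced_edges E S" using e IS unfolding Y_def induced_edges_def by auto
    have "{i,y} \<notin> Ht"
    proof
      assume "{i,y} \<in> Ht"
      show False
      proof (cases "{i,y} \<in> F")
        case True then show False using iso[OF e(2)] by blast
      next
        case False
        then have "has_C4 (insert {i,y} F)" using sat \<open>{i,y} \<in> Ht\<close> unfolding C4_saturated_in_def by blast
        moreover have "\<not> has_C4 F" using sat unfolding C4_saturated_in_def by blast
        ultimately obtain y' x where "{i,y'} \<in> F" using C4_insert by blast
        then show False using iso[OF e(2)] by blast
      qed
    qed
    then show "e \<in> R" using ind e unfolding R_def by blast
  qed
  have "real (card (cross I Y \<inter> E)) \<le> real (card R)" using card_mono[OF finR sub] by simp
  also have "\<dots> \<le> c * real n" using Rc unfolding R_def .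
  finally have le: "real (card (cross I Y \<inter> E)) \<le> c * real n" .
  have "I \<subseteq> {0..<n}" "Y \<subseteq> {0..<n}" "I \<inter> Y = {}" using IS S unfolding Y_def by auto
  then have "real (card (cross I Y \<inter> E)) > c * real n" using cr I(2) Yc unfolding Rcross_def by blast
  then show False using le by simp
qed

lemma sum_Pow_power:
  fixes x :: real
  assumes "finite A"
  shows "(\<Sum>T\<in>Pow A. x ^ card T) = (1 + x) ^ card A"
  using assms
proof (induction A rule: finite_induct)
  case empty then show ?case by simp
next
  case (insert a A)
  have disj: "Pow A \<inter> insert a ` Pow A = {}" using insert by auto
  have inj: "inj_on (insert a) (Pow A)"
  proof (rule inj_onI)
    fix X Y assume "X \<in> Pow A" "Y \<in> Pow A" "insert a X = insert a Y"
    moreover have "a \<notin> X" "a \<notin> Y" using insert calculation by auto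
    ultimately show "X = Y" by (metis Diff_insert_absorb)
  qed
  have "(\<Sum>T\<in>Pow (insert a A). x ^ card T) = (\<Sum>T\<in>Pow A. x ^ card T) + (\<Sum>T\<in>insert a ` Pow A. x ^ card T)"
    unfolding Pow_insert using insert disj by (intro sum.union_disjoint) auto
  also have "(\<Sum>T\<in>insert a ` Pow A. x ^ card T) = (\<Sum>T\<in>Pow A. x ^ card (insert a T))"
    by (rule sum.reindex[OF inj, unfolded comp_def])
  also have "\<dots> = (\<Sum>T\<in>Pow A. x * x ^ card T)"
  proof (rule sum.cong[OF refl])
    fix T assume "T \<in> Pow A"
    then have "finite T" "a \<notin> T" using insert finite_subset by auto
    then show "x ^ card (insert a T) = x * x ^ card T" by simp
  qed
  also have "\<dots> = x * (1 + x) ^ card A" using insert.IH by (simp add: sum_distrib_left[symmetric])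
  finally show ?case using insert by (simp add: algebra_simps)
qed

lemma in_all_edges:
  assumes "x \<noteq> y" "x < n" "y < n"
  shows "{x,y} \<in> all_edges n"
proof (cases "x < y")
  case True then show ?thesis unfolding all_edges_def using assms by blast
next
  case False then have "y < x" using assms(1) by simp
  then have "{x,y} = {y,x} \<and> y < x \<and> x < n" using assms by (simp add: insert_commute)
  then show ?thesis unfolding all_edges_def by blast
qed

lemma exp_bound_aux:
  fixes p y :: real and N :: nat
  assumes "0 \<le> p" "p \<le> 1" "0 \<le> y"
  shows "2 powr y * (1 - p/2) ^ N \<le> exp (y - p * real N / 2)"
proof -
  have "2 powr y = exp (y * ln 2)" by (simp add: powr_def)
  also have "\<dots> \<le> exp y" using assms ln_2_less_1 by (simp add: mult_left_le)
  finally have a: "2 powr y \<le> exp y" .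
  have "1 - p/2 \<le> exp (- (p/2))" using exp_ge_add_one_self[of "-(p/2)"] by simp
  then have "(1 - p/2) ^ N \<le> exp (- (p/2)) ^ N" using assms by (intro power_mono) auto
  also have "\<dots> = exp (- p * real N / 2)" by (simp add: exp_of_nat_mult[symmetric])
  finally have b: "(1 - p/2) ^ N \<le> exp (- p * real N / 2)" .
  have "2 powr y * (1 - p/2) ^ N \<le> exp y * exp (- p * real N / 2)"
    using a b assms by (intro mult_mono) auto
  also have "\<dots> = exp (y - p * N / 2)" by (simp add: exp_add[symmetric])
  finally show ?thesis .
qed

lemma prob_not_dense:
  assumes p: "0 < p" "p < 1" and n: "n \<ge> 1"
  shows "measure_pmf.prob (Gnp n p) {E. \<not> Rdense p n E} \<le> (1 + 1 / real n ^ 2) ^ n - 1"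
proof -
  define \<T> where "\<T> = {T \<in> Pow {0..<n}. real (card T) \<ge> 16/p * ln (real n) + 1}"
  define B where "B = (\<lambda>T. {E. real (card (pairs T \<inter> E)) \<le> p/4 * real (card (pairs T))})"
  have L0: "ln (real n) \<ge> 0" using n by simp
  have "{E. \<not> Rdense p n E} = (\<Union>T\<in>\<T>. B T)"
    unfolding Rdense_def \<T>_def B_def by (auto simp: not_less)
  then have "measure_pmf.prob (Gnp n p) {E. \<not> Rdense p n E} \<le> (\<Sum>T\<in>\<T>. measure_pmf.prob (Gnp n p) (B T))"
    by (simp only:) (rule measure_UNION_le, auto simp: \<T>_def)
  also have "\<dots> \<le> (\<Sum>T\<in>\<T>. (1 / real n ^ 2) ^ card T)"
  proof (rule sum_mono)
    fix T assume T: "T \<in> \<T>"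
    let ?t = "real (card T)"
    let ?N = "card (pairs T)"
    have TS: "T \<subseteq> {0..<n}" using T unfolding \<T>_def by auto
    have finT: "finite T" using TS finite_subset by blast
    have PA: "pairs T \<subseteq> all_edges n"
    proof
      fix e assume "e \<in> pairs T"
      then obtain x y where "e = {x,y}" "x \<noteq> y" "e \<subseteq> T" unfolding pairs_def card_2_iff by blast
      moreover have "x \<in> T" "y \<in> T" using calculation by auto
      then have "x < n" "y < n" using TS by auto
      ultimately show "e \<in> all_edges n" using in_all_edges[of x y n] by simp
    qed
    have "measure_pmf.prob (Gnp n p) (B T) \<le> 2 powr (p/4 * real ?N) * (1 - p/2) ^ ?N"
      unfolding B_def by (rule core[OF PA]) (use p in auto)
    also have "\<dots> \<le> exp (p/4 * real ?N - p * real ?N / 2)"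
      using exp_bound_aux[of p "p/4 * real ?N" ?N] p by simp
    also have "\<dots> = exp (- (p * (2 * real ?N) / 8))" by (simp add: field_simps)
    also have "\<dots> = exp (- (?t * (p * (?t - 1)) / 8))" by (subst card_pairs[OF finT]) (simp add: mult.left_commute)
    also have "\<dots> \<le> exp (- (?t * (16 * ln (real n)) / 8))"
    proof -
      have "?t \<ge> 16/p * ln (real n) + 1" using T unfolding \<T>_def by auto
      then have "p * (?t - 1) \<ge> 16 * ln (real n)" using p by (simp add: field_simps)
      then have "?t * (p * (?t - 1)) \<ge> ?t * (16 * ln (real n))" by (intro mult_left_mono) auto
      then show ?thesis by simp
    qed
    also have "\<dots> = (1 / real n ^ 2) ^ card T"
    proof -
      have pos: "1 / real n ^ 2 > 0" using n by simp
      have "(1 / real n ^ 2) ^ card T = exp (ln (1 / real n ^ 2)) ^ card T" using pos by simp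
      also have "\<dots> = exp (ln (1 / real n ^ 2) * ?t)" by (simp add: exp_of_nat_mult[symmetric] mult.commute)
      also have "ln (1 / real n ^ 2) = - 2 * ln (real n)" using n by (simp add: ln_div ln_realpow)
      finally show ?thesis by simp
    qed
    finally show "measure_pmf.prob (Gnp n p) (B T) \<le> (1 / real n ^ 2) ^ card T" .
  qed
  also have "\<dots> \<le> (\<Sum>T\<in>Pow {0..<n} - {{}}. (1 / real n ^ 2) ^ card T)"
  proof (rule sum_mono2)
    show "\<T> \<subseteq> Pow {0..<n} - {{}}"
    proof
      fix T assume "T \<in> \<T>"
      moreover have "16/p * ln (real n) \<ge> 0" using L0 p by simp
      ultimately show "T \<in> Pow {0..<n} - {{}}" unfolding \<T>_def by auto
    qed
  qed auto
  also have "\<dots> = (\<Sum>T\<in>Pow {0..<n}. (1 / real n ^ 2) ^ card T) - 1"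
    by (subst sum_diff) auto
  also have "\<dots> = (1 + 1 / real n ^ 2) ^ n - 1" by (subst sum_Pow_power) auto
  finally show ?thesis .
qed

lemma lim1: fixes c e :: real assumes "e > 0"
  shows "(\<lambda>n::nat. exp (real n * ln 4 + c * real n - 3/4 * e * real n * ln (real n))) \<longlonglongrightarrow> 0"
  using assms by real_asymp

lemma lim2: "(\<lambda>n::nat. exp (1 / real n) - 1) \<longlonglongrightarrow> 0"
  by real_asymp

lemma ev1: fixes p e :: real assumes "e > 0" "p > 0"
  shows "eventually (\<lambda>n::nat. 3 / p * ln (real n) + 1 \<le> e * real n / 2 \<and> ln (real n) \<ge> 1) sequentially"
proof (rule eventually_conj)
  show "eventually (\<lambda>n::nat. 3 / p * ln (real n) + 1 \<le> e * real n / 2) sequentially"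
    using assms by real_asymp
  show "eventually (\<lambda>n::nat. ln (real n) \<ge> 1) sequentially" by real_asymp
qed

lemma cross_image: "cross I Y = (\<lambda>(i,y). {i,y}) ` (I \<times> Y)"
  unfolding cross_def by auto

lemma card_cross:
  assumes "I \<inter> Y = {}" "finite I" "finite Y"
  shows "card (cross I Y) = card I * card Y"
proof -
  have "inj_on (\<lambda>(i,y). {i,y}) (I \<times> Y)"
  proof (rule inj_onI, clarify)
    fix i y i' y' assume h: "i \<in> I" "y \<in> Y" "i' \<in> I" "y' \<in> Y" "{i,y} = {i',y'}"
    then have "(i = i' \<and> y = y') \<or> (i = y' \<and> y = i')" by (simp add: doubleton_eq_iff)
    then show "i = i' \<and> y = y'" using h assms(1) by blast
  qed
  then show ?thesis unfolding cross_image by (simp add: card_image card_cartesian_product)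
qed

lemma prob_not_cross:
  fixes c \<epsilon> p :: real
  assumes p: "0 < p" "p < 1" and c: "c > 0" and e: "\<epsilon> > 0" and n: "n \<ge> 1"
  shows "measure_pmf.prob (Gnp n p) {E. \<not> Rcross p c \<epsilon> n E}
     \<le> exp (real n * ln 4 + c * real n - 3/4 * \<epsilon> * real n * ln (real n))"
proof -
  define \<P> where "\<P> = {(I,Y) \<in> Pow {0..<n} \<times> Pow {0..<n}. I \<inter> Y = {} \<and> card I = kiso p n \<and> real (card Y) \<ge> \<epsilon> * real n / 2}"
  define B where "B = (\<lambda>(I,Y). {E. real (card (cross I Y \<inter> E)) \<le> c * real n})"
  define b where "b = exp (c * real n - 3/4 * \<epsilon> * real n * ln (real n))"
  have L0: "ln (real n) \<ge> 0" using n by simp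
  have finP: "finite \<P>" unfolding \<P>_def by (rule finite_subset[of _ "Pow {0..<n} \<times> Pow {0..<n}"]) auto
  have "{E. \<not> Rcross p c \<epsilon> n E} = (\<Union>x\<in>\<P>. B x)"
    unfolding Rcross_def \<P>_def B_def by (auto simp: not_less)
  then have "measure_pmf.prob (Gnp n p) {E. \<not> Rcross p c \<epsilon> n E} \<le> (\<Sum>x\<in>\<P>. measure_pmf.prob (Gnp n p) (B x))"
    by (simp only:) (rule measure_UNION_le[OF finP], auto)
  also have "\<dots> \<le> (\<Sum>x\<in>\<P>. b)"
  proof (rule sum_mono)
    fix x assume x: "x \<in> \<P>"
    obtain I Y where xIY: "x = (I,Y)" by (cases x)
    have I: "I \<subseteq> {0..<n}" "card I = kiso p n" and Y: "Y \<subseteq> {0..<n}" "real (card Y) \<ge> \<epsilon> * real n / 2"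
      and IY: "I \<inter> Y = {}" using x unfolding xIY \<P>_def by auto
    have finI: "finite I" and finY: "finite Y" using I Y finite_subset by auto
    have CA: "cross I Y \<subseteq> all_edges n"
    proof
      fix e assume "e \<in> cross I Y"
      then obtain i y where "e = {i,y}" "i \<in> I" "y \<in> Y" unfolding cross_def by blast
      moreover have "i \<noteq> y" "i < n" "y < n" using calculation I Y IY by auto
      ultimately show "e \<in> all_edges n" using in_all_edges[of i y n] by simp
    qed
    let ?N = "card (cross I Y)"
    have "measure_pmf.prob (Gnp n p) (B x) \<le> 2 powr (c * real n) * (1 - p/2) ^ ?N"
      unfolding B_def xIY by (simp only: prod.case) (rule core[OF CA], use p in auto)
    also have "\<dots> \<le> exp (c * real n - p * real ?N / 2)"
      using exp_bound_aux[of p "c * real n" ?N] p c by simp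
    also have "\<dots> \<le> b"
    proof -
      have k: "p * real (kiso p n) \<ge> 3 * ln (real n)"
      proof -
        have "real (kiso p n) \<ge> 3 / p * ln (real n)" unfolding kiso_def
          using L0 p by (simp add: of_nat_nat) linarith
        then have "3 * ln (real n) / p \<le> real (kiso p n)" by simp
        then show ?thesis using p by (simp add: pos_divide_le_eq mult.commute)
      qed
      have "real ?N = real (kiso p n) * real (card Y)" using card_cross[OF IY finI finY] I by simp
      then have "p * real ?N = (p * real (kiso p n)) * real (card Y)" by simp
      also have "\<dots> \<ge> (3 * ln (real n)) * (\<epsilon> * real n / 2)"
        by (rule mult_mono[OF k]) (use Y L0 e k in auto)
      finally have "p * real ?N / 2 \<ge> 3/4 * \<epsilon> * real n * ln (real n)" by (simp add: algebra_simps)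
      then show ?thesis unfolding b_def by simp
    qed
    finally show "measure_pmf.prob (Gnp n p) (B x) \<le> b" .
  qed
  also have "\<dots> = real (card \<P>) * b" by simp
  also have "\<dots> \<le> 4 ^ n * b"
  proof -
    have "card \<P> \<le> card (Pow {0..<n} \<times> Pow {0..<n})"
      by (rule card_mono) (auto simp: \<P>_def)
    also have "\<dots> = 4 ^ n" by (simp add: card_cartesian_product card_Pow power_mult_distrib[symmetric])
    finally have "real (card \<P>) \<le> 4 ^ n" by (metis of_nat_le_iff of_nat_numeral of_nat_power)
    then show ?thesis unfolding b_def by (simp add: mult_right_mono)
  qed
  also have "\<dots> = exp (real n * ln 4 + c * real n - 3/4 * \<epsilon> * real n * ln (real n))"
  proof -
    have "(4::real) ^ n = exp (ln 4) ^ n" by simp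
    also have "\<dots> = exp (real n * ln 4)" by (simp add: exp_of_nat_mult)
    finally have "(4::real) ^ n = exp (real n * ln 4)" .
    then show ?thesis unfolding b_def by (simp add: exp_add[symmetric] algebra_simps)
  qed
  finally show ?thesis .
qed

lemma ln_sq_le: "n \<ge> 1 \<Longrightarrow> ln (real n) * ln (real n) \<le> 4 * real n"
proof -
  assume n: "n \<ge> 1"
  have sp: "sqrt (real n) > 0" using n by simp
  have "ln (real n) = 2 * ln (sqrt (real n))" using n by (simp add: ln_sqrt)
  also have "\<dots> \<le> 2 * (sqrt (real n) - 1)" using ln_le_minus_one[OF sp] by simp
  also have "\<dots> \<le> 2 * sqrt (real n)" by simp
  finally have a: "ln (real n) \<le> 2 * sqrt (real n)" .
  have b: "ln (real n) \<ge> 0" using n by simp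
  have "ln (real n) * ln (real n) \<le> (2 * sqrt (real n)) * (2 * sqrt (real n))"
    using a b by (intro mult_mono) auto
  also have "\<dots> = 4 * real n" by simp
  finally show ?thesis .
qed

lemma arith_final:
  fixes L p sF c n X :: real
  assumes L: "L \<ge> 1" "L * L \<le> 4 * n" and p: "0 < p" "p < 1" and sF: "sF \<ge> 0" and c: "c > 0"
    and X: "X \<le> 2 * c * n / L + 2 * sF * (16/p * L + 2 + 8 * L / p)
       + (16/p * L + 2 + 8 * (L + 1 + sF * (16/p * L + 2 + 8 * L / p)) / p)"
  shows "X \<le> (2 * c + 400 / p\<^sup>2) * (sF * L + n / L)"
proof -
  define q where "q = 1 / p"
  have q1: "q \<ge> 1" using p unfolding q_def by simp
  have qL: "q * L \<ge> 1" using q1 L mult_mono[of 1 q 1 L] by simp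
  define s0 where "s0 = 16/p * L + 2 + 8 * L / p"
  have s0: "s0 = 24 * (q * L) + 2" unfolding s0_def q_def by (simp add: field_simps)
  have s0b: "s0 \<le> 26 * (q * L)" using s0 qL by linarith
  have s0pos: "s0 \<ge> 0" using s0 qL by linarith
  have X': "X \<le> 2 * c * n / L + sF * s0 * (2 + 8 * q) + (16 * (q * L) + 2 + 8 * q * L + 8 * q)"
  proof -
    have "p \<noteq> 0" "L \<noteq> 0" using p L by auto
    then have "2 * c * n / L + 2 * sF * s0 + (16/p * L + 2 + 8 * (L + 1 + sF * s0) / p)
      = 2 * c * n / L + sF * s0 * (2 + 8 * q) + (16 * (q * L) + 2 + 8 * q * L + 8 * q)"
      unfolding q_def by (simp add: field_simps)
    then show ?thesis using X unfolding s0_def[symmetric] by linarith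
  qed
  have t1: "sF * s0 * (2 + 8 * q) \<le> sF * (26 * (q * L)) * (10 * q)"
    using sF s0b s0pos q1 by (intro mult_mono) auto
  define A where "A = (q * q) * (sF * L)"
  define B where "B = (q * q) * (n / L)"
  have t1': "sF * (26 * (q * L)) * (10 * q) = 260 * A" unfolding A_def by (simp add: algebra_simps)
  have "16 * (q * L) + 2 + 8 * q * L + 8 * q \<le> 34 * (q * L)"
  proof -
    have "2 \<le> 2 * (q * L)" "8 * q \<le> 8 * (q * L)" using qL q1 L mult_left_mono[of 1 L q] by auto
    moreover have "8 * q * L = 8 * (q * L)" by simp
    ultimately show ?thesis by linarith
  qed
  also have "\<dots> \<le> 34 * ((q * q) * L)" using q1 L by (simp add: mult_left_mono mult_right_mono)
  also have "L \<le> 4 * (n / L)" using L by (simp add: field_simps)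
  then have "34 * ((q * q) * L) \<le> 34 * ((q * q) * (4 * (n / L)))" by (intro mult_left_mono) auto
  also have "\<dots> = 136 * B" unfolding B_def by simp
  finally have t2: "16 * (q * L) + 2 + 8 * q * L + 8 * q \<le> 136 * B" .
  have nL: "n / L \<ge> 0"
  proof -
    have "0 \<le> L * L" using L by simp
    then have "0 \<le> n" using L by linarith
    then show ?thesis using L by simp
  qed
  have A0: "A \<ge> 0" unfolding A_def using sF L by simp
  have B0: "B \<ge> 0" unfolding B_def using nL q1 by (intro mult_nonneg_nonneg) auto
  have qq: "q * q = 1 / p\<^sup>2" unfolding q_def by (simp add: power2_eq_square)
  have "X \<le> 2 * c * (n / L) + 260 * A + 136 * B"
    using X' t1 t1' t2 by simp
  also have "\<dots> \<le> 2 * c * (n / L) + 400 * A + 400 * B"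
    using A0 B0 by linarith
  also have "\<dots> \<le> (2 * c + 400 * (q * q)) * (sF * L + n / L)"
  proof -
    have "0 \<le> L * (c * sF)" using c sF L by simp
    then show ?thesis unfolding A_def B_def by (simp add: algebra_simps)
  qed
  finally show ?thesis unfolding qq by simp
qed

lemma pow_le_exp: "n \<ge> 1 \<Longrightarrow> (1 + 1 / real n ^ 2) ^ n \<le> exp (1 / real n)"
proof -
  assume n: "n \<ge> 1"
  have "1 + 1 / real n ^ 2 \<le> exp (1 / real n ^ 2)" by (rule exp_ge_add_one_self)
  then have "(1 + 1 / real n ^ 2) ^ n \<le> exp (1 / real n ^ 2) ^ n" by (intro power_mono) auto
  also have "\<dots> = exp (real n * (1 / real n ^ 2))" by (simp only: exp_of_nat_mult)
  also have "real n * (1 / real n ^ 2) = 1 / real n" using n by (simp add: power2_eq_square)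
  finally show ?thesis .
qed

theorem lemma11:
  fixes p c \<epsilon> :: real
  assumes "0 < p" "p < 1" "c > 0" "\<epsilon> > 0"
  shows "\<exists>K > 0. whp p (\<lambda>n E.
    \<forall>S \<subseteq> {0..<n}. real (card S) \<ge> \<epsilon> * real n \<longrightarrow>
      (\<forall>F Ht. F \<subseteq> Ht \<and> Ht \<subseteq> induced_edges E S \<and>
              real (card (induced_edges E S - Ht)) \<le> c * real n \<and>
              C4_saturated_in F Ht \<longrightarrow>
        real (card {v \<in> S. degree F v = 0}) \<le> of_int \<lfloor>3 / p * ln (real n)\<rfloor> \<and>
        real (card {v \<in> S. degree F v = 1})
          \<le> K * (sqrt (real (card F)) * ln (real n) + real n / ln (real n))))"
proof -
  note p = assms(1,2) and c = assms(3) and e = assms(4)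
  define K where "K = 2 * c + 400 / p\<^sup>2"
  have Kpos: "K > 0" unfolding K_def using c p by (simp add: add_pos_pos)
  define Q where "Q = (\<lambda>n E.
    \<forall>S \<subseteq> {0..<n}. real (card S) \<ge> \<epsilon> * real n \<longrightarrow>
      (\<forall>F Ht. F \<subseteq> Ht \<and> Ht \<subseteq> induced_edges E S \<and>
              real (card (induced_edges E S - Ht)) \<le> c * real n \<and>
              C4_saturated_in F Ht \<longrightarrow>
        real (card {v \<in> S. degree F v = 0}) \<le> of_int \<lfloor>3 / p * ln (real n)\<rfloor> \<and>
        real (card {v \<in> S. degree F v = 1})
          \<le> K * (sqrt (real (card F)) * ln (real n) + real n / ln (real n))))"
  have good: "Q n E" if n: "3 / p * ln (real n) + 1 \<le> \<epsilon> * real n / 2" "ln (real n) \<ge> 1"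
    and E: "E \<in> set_pmf (Gnp n p)" and D: "Rdense p n E" and C: "Rcross p c \<epsilon> n E" for n E
  proof -
    have Esub: "E \<subseteq> all_edges n" using E set_pmf_Gnp by blast
    have n1: "n \<ge> 1"
    proof (rule ccontr)
      assume "\<not> n \<ge> 1" then have "n = 0" by simp
      then show False using n(2) by simp
    qed
    have kb: "real (kiso p n) \<le> \<epsilon> * real n / 2"
    proof -
      have "ln (real n) \<ge> 0" using n1 by simp
      then have "3 / p * ln (real n) \<ge> 0" using p by simp
      then have "real (kiso p n) \<le> 3 / p * ln (real n) + 1" unfolding kiso_def
        by (simp add: of_nat_nat)
      then show ?thesis using n(1) by linarith
    qed
    show ?thesis unfolding Q_def
    proof (intro allI impI conjI)
      fix S F Ht assume S: "S \<subseteq> {0..<n}" and Sc: "real (card S) \<ge> \<epsilon> * real n"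
        and H: "F \<subseteq> Ht \<and> Ht \<subseteq> induced_edges E S \<and> real (card (induced_edges E S - Ht)) \<le> c * real n \<and> C4_saturated_in F Ht"
      show "real (card {v \<in> S. degree F v = 0}) \<le> of_int \<lfloor>3 / p * ln (real n)\<rfloor>"
        using iso_bound[OF Esub C p(1) S Sc _ _ _ _ kb n1] H by blast
      have b: "real (card {v \<in> S. degree F v = 1}) \<le> 2 * c * real n / ln (real n)
     + 2 * sqrt (real (card F)) * (16/p * ln (real n) + 2 + 8 * ln (real n) / p)
     + (16/p * ln (real n) + 2 + 8 * (ln (real n) + 1 + sqrt (real (card F)) * (16/p * ln (real n) + 2 + 8 * ln (real n) / p)) / p)"
        using deg1_bound[OF Esub D p S _ _ _ _ n(2)] H by blast
      have "real (card {v \<in> S. degree F v = 1}) \<le> (2 * c + 400 / p\<^sup>2) * (sqrt (real (card F)) * ln (real n) + real n / ln (real n))"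
        by (rule arith_final[OF n(2) ln_sq_le[OF n1] p _ c b]) simp
      then show "real (card {v \<in> S. degree F v = 1}) \<le> K * (sqrt (real (card F)) * ln (real n) + real n / ln (real n))"
        unfolding K_def .
    qed
  qed
  define U where "U = (\<lambda>n::nat. ((1 + 1 / real n ^ 2) ^ n - 1) + exp (real n * ln 4 + c * real n - 3/4 * \<epsilon> * real n * ln (real n)))"
  have lower: "eventually (\<lambda>n. 1 - U n \<le> measure_pmf.prob (Gnp n p) {E. Q n E}) sequentially"
    using ev1[OF e p(1)]
  proof eventually_elim
    case (elim n)
    have n1: "n \<ge> 1"
    proof (rule ccontr)
      assume "\<not> n \<ge> 1" then have "n = 0" by simp
      then show False using elim by simp
    qed
    let ?M = "Gnp n p"
    have sub: "UNIV - {E. Q n E} \<subseteq> ({E. \<not> Rdense p n E} \<union> {E. \<not> Rcross p c \<epsilon> n E}) \<union> (UNIV - set_pmf ?M)"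
      using good[of n] elim by blast
    have "measure_pmf.prob ?M (UNIV - {E. Q n E}) \<le> measure_pmf.prob ?M (({E. \<not> Rdense p n E} \<union> {E. \<not> Rcross p c \<epsilon> n E}) \<union> (UNIV - set_pmf ?M))"
      by (rule measure_pmf.finite_measure_mono[OF sub]) simp
    also have "\<dots> \<le> measure_pmf.prob ?M ({E. \<not> Rdense p n E} \<union> {E. \<not> Rcross p c \<epsilon> n E}) + measure_pmf.prob ?M (UNIV - set_pmf ?M)"
      by (rule measure_Un_le) auto
    also have "measure_pmf.prob ?M (UNIV - set_pmf ?M) = 0" by (simp add: measure_pmf_zero_iff)
    also have "measure_pmf.prob ?M ({E. \<not> Rdense p n E} \<union> {E. \<not> Rcross p c \<epsilon> n E}) \<le> measure_pmf.prob ?M {E. \<not> Rdense p n E} + measure_pmf.prob ?M {E. \<not> Rcross p c \<epsilon> n E}"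
      by (rule measure_Un_le) auto
    also have "\<dots> \<le> U n" unfolding U_def
      using prob_not_dense[OF p n1] prob_not_cross[OF p c e n1] by (intro add_mono) auto
    finally have "measure_pmf.prob ?M (UNIV - {E. Q n E}) \<le> U n" by simp
    moreover have "measure_pmf.prob ?M (UNIV - {E. Q n E}) = 1 - measure_pmf.prob ?M {E. Q n E}"
      using measure_pmf.prob_compl[of "{E. Q n E}" ?M] by (simp add: Compl_eq_Diff_UNIV)
    ultimately show ?case by simp
  qed
  have U0: "U \<longlonglongrightarrow> 0"
  proof -
    have a: "(\<lambda>n::nat. (1 + 1 / real n ^ 2) ^ n - 1) \<longlonglongrightarrow> 0"
    proof (rule tendsto_sandwich[OF _ _ tendsto_const lim2])
      show "eventually (\<lambda>n::nat. 0 \<le> (1 + 1 / real n ^ 2) ^ n - 1) sequentially"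
        by (intro always_eventually allI) (simp add: one_le_power)
      show "eventually (\<lambda>n::nat. (1 + 1 / real n ^ 2) ^ n - 1 \<le> exp (1 / real n) - 1) sequentially"
        using eventually_ge_at_top[of 1] by eventually_elim (use pow_le_exp in auto)
    qed
    show ?thesis unfolding U_def using tendsto_add[OF a lim1[OF e, of c]] by simp
  qed
  have "(\<lambda>n. measure_pmf.prob (Gnp n p) {E. Q n E}) \<longlonglongrightarrow> 1"
  proof (rule tendsto_sandwich[OF lower _ _ tendsto_const])
    show "eventually (\<lambda>n. measure_pmf.prob (Gnp n p) {E. Q n E} \<le> 1) sequentially" by simp
    show "(\<lambda>n. 1 - U n) \<longlonglongrightarrow> 1" using tendsto_diff[OF tendsto_const U0, of 1] by simp
  qed
  then have "whp p Q" unfolding whp_def .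
  then show ?thesis using Kpos unfolding Q_def by blast
qed

end
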